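(* Let $\lambda\supseteq\mu$ be partitions and let $T$ be a Dyck tiling of $\lambda\setminus\mu$. The following nine conditions are equivalent: (1) $T$ is cover-inclusive; (2) whenever $\mathfrak a$ and $\mathtt N(\mathfrak a)$ are both nodes of $\lambda\setminus\mu$, we have $\operatorname{dp}(\mathtt N(\mathfrak a))\ge\operatorname{dp}(\mathfrak a)$; (3) whenever $\mathfrak a$ and $\mathtt N(\mathfrak a)$ are both nodes of $\lambda\setminus\mu$, we have $\operatorname{tile}(\mathfrak a)+(1,1)\subseteq\operatorname{tile}(\mathtt N(\mathfrak a))$; (4) whenever $\mathfrak a$ and $\mathtt N(\mathfrak a)$ are nodes of $\lambda\setminus\mu$ and $\mathfrak a$ is attached to $\mathtt{NW}(\mathfrak a)$, the node $\mathtt{NW}(\mathtt N(\mathfrak a))$ lies in $\lambda\setminus\mu$ and $\mathtt N(\mathfrak a)$ is attached to it; (5) whenever $\mathfrak a$ and $\mathtt N(\mathfrak a)$ are nodes of $\lambda\setminus\mu$ and $\mathtt N(\mathfrak a)$ is the end node of its tile, $\mathfrak a$ is the end node of its tile; (6) $T$ is right-cover-inclusive; (7) whenever $\mathfrak a$ and $\mathtt N(\mathfrak a)$ are nodes of $\lambda\setminus\mu$ and $\mathfrak a$ is attached to $\mathtt{NE}(\mathfrak a)$, the node $\mathtt{NE}(\mathtt N(\mathfrak a))$ lies in $\lambda\setminus\mu$ and $\mathtt N(\mathfrak a)$ is attached to it; (8) whenever $\mathfrak a$ and $\mathtt N(\mathfrak a)$ are nodes of $\lambda\setminus\mu$ and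 $\mathtt N(\mathfrak a)$ is the start node of its tile, $\mathfrak a$ is the start node of its tile; (9) $T$ is left-cover-inclusive.
   Context: A partition $\lambda$ is identified with its Young diagram $\{(a,b)\in\mathbb N^2: b\le\lambda_a\}$ ($\mathbb N=\{1,2,\dots\}$); $\lambda\supseteq\mu$ means $\lambda_i\ge\mu_i$ for all $i$, and $\lambda\setminus\mu$ is the set difference of diagrams. Elements of $\mathbb N^2$ are called nodes. The height of $(a,b)$ is $\operatorname{ht}(a,b)=a+b$, and $(a,b)$ lies in column $b-a$; a node is to the left of another if its column index is smaller. Neighbours of a node $\mathfrak n$: $\mathtt{NE}(\mathfrak n)=\mathfrak n+(0,1)$, $\mathtt{SW}(\mathfrak n)=\mathfrak n-(0,1)$, $\mathtt{NW}(\mathfrak n)=\mathfrak n+(1,0)$, $\mathtt{SE}(\mathfrak n)=\mathfrak n-(1,0)$, $\mathtt N(\mathfrak n)=\mathfrak n+(1,1)$, $\mathtt S(\mathfrak n)=\mathfrak n-(1,1)$. A tile is a finite nonempty set $t$ of nodes that can be ordered $\mathfrak n_1,\dots,\mathfrak n_r$ with $\mathfrak n_{i+1}\in\{\mathtt{NE}(\mathfrak n_i),\mathtt{SE}(\mathfrak n_i)\}$; its start $\operatorname{st}(t)$ is its leftmost node and its end $\operatorname{en}(t)$ its rightmost node; $\operatorname{ht}(t)=\max_{\mathfrak n\in t}\operatorname{ht}(\mathfrak n)$; $t$ is a Dyck tile if $\operatorname{ht}(\operatorname{st}t)=\operatorname{ht}(\operatorname{en}t)=\operatorname{ht}(t)$.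 The depth of $\mathfrak n\in t$ is $\operatorname{dp}(\mathfrak n)=\operatorname{ht}(t)-\operatorname{ht}(\mathfrak n)$. A Dyck tiling of $\lambda\setminus\mu$ is a partition of $\lambda\setminus\mu$ into Dyck tiles; $\operatorname{tile}(\mathfrak n)$ is the tile containing $\mathfrak n$, and $\mathfrak n$ is attached to a neighbour if they lie in the same tile. A Dyck tiling is left-cover-inclusive if whenever $\mathfrak a,\mathtt N(\mathfrak a)\in\lambda\setminus\mu$, $\operatorname{st}(\operatorname{tile}(\mathtt N(\mathfrak a)))$ lies weakly to the left of $\operatorname{st}(\operatorname{tile}(\mathfrak a))$; right-cover-inclusive if whenever $\mathfrak a,\mathtt N(\mathfrak a)\in\lambda\setminus\mu$, $\operatorname{en}(\operatorname{tile}(\mathtt N(\mathfrak a)))$ lies weakly to the right of $\operatorname{en}(\operatorname{tile}(\mathfrak a))$; cover-inclusive if both. *)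

theory Defs
  imports Main
begin

type_synonym node = "nat \<times> nat"

text \<open>A partition is a weakly decreasing, eventually zero sequence lam 1, lam 2, ...
  (the value at index 0 is irrelevant).\<close>
definition is_partition :: "(nat \<Rightarrow> nat) \<Rightarrow> bool" where
  "is_partition lam \<longleftrightarrow> (\<forall>i j. 1 \<le> i \<longrightarrow> i \<le> j \<longrightarrow> lam j \<le> lam i)
     \<and> finite {i. 1 \<le> i \<and> lam i \<noteq> 0}"

definition contains :: "(nat \<Rightarrow> nat) \<Rightarrow> (nat \<Rightarrow> nat) \<Rightarrow> bool" where
  "contains lam mu \<longleftrightarrow> (\<forall>i\<ge>1. mu i \<le> lam i)"

definition is_node :: "node \<Rightarrow> bool" where
  "is_node n \<longleftrightarrow> 1 \<le> fst n \<and> 1 \<le> snd n"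

definition diagram :: "(nat \<Rightarrow> nat) \<Rightarrow> node set" where
  "diagram lam = {(a, b). 1 \<le> a \<and> 1 \<le> b \<and> b \<le> lam a}"

definition skew :: "(nat \<Rightarrow> nat) \<Rightarrow> (nat \<Rightarrow> nat) \<Rightarrow> node set" where
  "skew lam mu = diagram lam - diagram mu"

definition ht :: "node \<Rightarrow> nat" where
  "ht n = fst n + snd n"

definition col :: "node \<Rightarrow> int" where
  "col n = int (snd n) - int (fst n)"

definition NE :: "node \<Rightarrow> node" where "NE n = (fst n, snd n + 1)"
definition SW :: "node \<Rightarrow> node" where "SW n = (fst n, snd n - 1)"
definition NW :: "node \<Rightarrow> node" where "NW n = (fst n + 1, snd n)"
definition SE :: "node \<Rightarrow> node" where "SE n = (fst n - 1, snd n)"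
definition N :: "node \<Rightarrow> node" where "N n = (fst n + 1, snd n + 1)"
definition S :: "node \<Rightarrow> node" where "S n = (fst n - 1, snd n - 1)"

definition is_tile :: "node set \<Rightarrow> bool" where
  "is_tile t \<longleftrightarrow> (\<exists>ns. ns \<noteq> [] \<and> set ns = t \<and> (\<forall>n\<in>t. is_node n) \<and>
      (\<forall>i. Suc i < length ns \<longrightarrow> ns ! Suc i \<in> {NE (ns ! i), SE (ns ! i)}))"

definition st :: "node set \<Rightarrow> node" where
  "st t = (THE n. n \<in> t \<and> (\<forall>m\<in>t. col n \<le> col m))"

definition en :: "node set \<Rightarrow> node" where
  "en t = (THE n. n \<in> t \<and> (\<forall>m\<in>t. col m \<le> col n))"

definition tile_ht :: "node set \<Rightarrow> nat" where
  "tile_ht t = Max (ht ` t)"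

definition is_dyck_tile :: "node set \<Rightarrow> bool" where
  "is_dyck_tile t \<longleftrightarrow> is_tile t \<and> ht (st t) = tile_ht t \<and> ht (en t) = tile_ht t"

definition is_dyck_tiling :: "node set set \<Rightarrow> node set \<Rightarrow> bool" where
  "is_dyck_tiling T R \<longleftrightarrow> (\<forall>t\<in>T. is_dyck_tile t) \<and> \<Union>T = R \<and>
      (\<forall>t\<in>T. \<forall>u\<in>T. t \<noteq> u \<longrightarrow> t \<inter> u = {})"

definition tile_of :: "node set set \<Rightarrow> node \<Rightarrow> node set" where
  "tile_of T n = (THE t. t \<in> T \<and> n \<in> t)"

definition attached :: "node set set \<Rightarrow> node \<Rightarrow> node \<Rightarrow> bool" where
  "attached T m n \<longleftrightarrow> (\<exists>t\<in>T. m \<in> t \<and> n \<in> t)"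

definition dp :: "node set set \<Rightarrow> node \<Rightarrow> nat" where
  "dp T n = tile_ht (tile_of T n) - ht n"

definition left_cover_inclusive :: "node set set \<Rightarrow> node set \<Rightarrow> bool" where
  "left_cover_inclusive T R \<longleftrightarrow> (\<forall>a. a \<in> R \<and> N a \<in> R \<longrightarrow>
      col (st (tile_of T (N a))) \<le> col (st (tile_of T a)))"

definition right_cover_inclusive :: "node set set \<Rightarrow> node set \<Rightarrow> bool" where
  "right_cover_inclusive T R \<longleftrightarrow> (\<forall>a. a \<in> R \<and> N a \<in> R \<longrightarrow>
      col (en (tile_of T a)) \<le> col (en (tile_of T (N a))))"

definition cover_inclusive :: "node set set \<Rightarrow> node set \<Rightarrow> bool" where
  "cover_inclusive T R \<longleftrightarrow> left_cover_inclusive T R \<and> right_cover_inclusive T R"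

end

theory Submission imports Defs begin

lemma col_NE[simp]: "col (NE n) = col n + 1" by (simp add: col_def NE_def)
lemma ht_NE[simp]: "ht (NE n) = ht n + 1" by (simp add: ht_def NE_def)
lemma col_SE: "1 \<le> fst n \<Longrightarrow> col (SE n) = col n + 1" by (simp add: col_def SE_def)
lemma ht_SE: "1 \<le> fst n \<Longrightarrow> ht (SE n) + 1 = ht n" by (simp add: ht_def SE_def)
lemma col_N[simp]: "col (N n) = col n" by (simp add: col_def N_def)
lemma ht_N[simp]: "ht (N n) = ht n + 2" by (simp add: ht_def N_def)
lemma col_NW[simp]: "col (NW n) = col n - 1" by (simp add: col_def NW_def)
lemma ht_NW[simp]: "ht (NW n) = ht n + 1" by (simp add: ht_def NW_def)

lemma same_node: "col x = col y \<Longrightarrow> ht x = ht y \<Longrightarrow> x = y"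
  by (cases x; cases y) (auto simp: col_def ht_def)

lemma parity: "col x = col y \<Longrightarrow> ht x < ht y \<Longrightarrow> ht x + 2 \<le> ht y"
  by (cases x; cases y) (simp add: col_def ht_def; presburger)

lemma tile_col:
  assumes st: "\<forall>i. Suc i < length ns \<longrightarrow> ns ! Suc i \<in> {NE (ns ! i), SE (ns ! i)}"
    and nd: "\<forall>n\<in>set ns. is_node n"
  shows "i < length ns \<Longrightarrow> col (ns!i) = col (ns!0) + int i"
proof (induction i)
  case 0 then show ?case by simp
next
  case (Suc i)
  have "ns ! i \<in> set ns" using Suc.prems by simp
  then have "1 \<le> fst (ns!i)" using nd by (auto simp: is_node_def)
  moreover have "ns ! Suc i \<in> {NE (ns ! i), SE (ns ! i)}" using st Suc.prems by blast
  ultimately have "col (ns ! Suc i) = col (ns!i) + 1" using col_SE[of "ns!i"] by auto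
  then show ?case using Suc by simp
qed

lemma tile_props:
  assumes "is_tile t"
  shows "finite t" "t \<noteq> {}" "\<And>n. n \<in> t \<Longrightarrow> is_node n"
    "\<And>x y. x \<in> t \<Longrightarrow> y \<in> t \<Longrightarrow> col x = col y \<Longrightarrow> x = y"
    "\<And>x y k. x \<in> t \<Longrightarrow> y \<in> t \<Longrightarrow> col x \<le> k \<Longrightarrow> k \<le> col y \<Longrightarrow> \<exists>z\<in>t. col z = k"
    "\<And>u x. u \<in> t \<Longrightarrow> x \<in> t \<Longrightarrow> col x = col u + 1 \<Longrightarrow> x = NE u \<or> x = SE u"
    "\<exists>x\<in>t. \<forall>m\<in>t. col x \<le> col m"
    "\<exists>x\<in>t. \<forall>m\<in>t. col m \<le> col x"
proof -
  obtain ns where ne: "ns \<noteq> []" and set: "set ns = t" and nd: "\<forall>n\<in>t. is_node n"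
    and stp: "\<forall>i. Suc i < length ns \<longrightarrow> ns ! Suc i \<in> {NE (ns ! i), SE (ns ! i)}"
    using assms unfolding is_tile_def by blast
  have cl: "\<And>i. i < length ns \<Longrightarrow> col (ns!i) = col (ns!0) + int i"
    using tile_col[OF stp] nd set by blast
  have idx: "\<And>x. x \<in> t \<Longrightarrow> \<exists>i<length ns. x = ns!i" using set by (metis in_set_conv_nth)
  show "finite t" using set by auto
  show "t \<noteq> {}" using set ne by auto
  show "\<And>n. n \<in> t \<Longrightarrow> is_node n" using nd by auto
  show "x = y" if H: "x \<in> t" "y \<in> t" "col x = col y" for x y
  proof -
    obtain i j where i: "i < length ns" "x = ns!i" and j: "j < length ns" "y = ns!j"
      using idx H by blast
    have "col (ns!i) = col (ns!0) + int i" "col (ns!j) = col (ns!0) + int j" using cl i j by auto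
    then have "i = j" using i j H by simp
    then show ?thesis using i j by simp
  qed
  show "\<exists>z\<in>t. col z = k" if H: "x \<in> t" "y \<in> t" "col x \<le> k" "k \<le> col y" for x y k
  proof -
    obtain i j where i: "i < length ns" "x = ns!i" and j: "j < length ns" "y = ns!j"
      using idx H by blast
    have cx: "col x = col (ns!0) + int i" using cl i by simp
    have cy: "col y = col (ns!0) + int j" using cl j by simp
    define m where "m = nat (k - col (ns!0))"
    have m1: "int m = k - col (ns!0)" unfolding m_def using cx H(3) by simp
    have m2: "m < length ns" using m1 cy H(4) j(1) by linarith
    have "col (ns!m) = k" using cl[OF m2] m1 by simp
    then show ?thesis using m2 set by auto
  qed
  show "x = NE u \<or> x = SE u" if H: "u \<in> t" "x \<in> t" "col x = col u + 1" for u x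
  proof -
    obtain i j where i: "i < length ns" "u = ns!i" and j: "j < length ns" "x = ns!j"
      using idx H by blast
    have "col (ns!i) = col (ns!0) + int i" "col (ns!j) = col (ns!0) + int j" using cl i j by auto
    then have "j = Suc i" using i j H by simp
    then show ?thesis using stp i j by auto
  qed
  show "\<exists>x\<in>t. \<forall>m\<in>t. col x \<le> col m"
  proof (intro bexI[of _ "ns!0"] ballI)
    fix m assume "m \<in> t" then obtain i where "i < length ns" "m = ns!i" using idx by blast
    then show "col (ns!0) \<le> col m" using cl by simp
  qed (use set ne in auto)
  show "\<exists>x\<in>t. \<forall>m\<in>t. col m \<le> col x"
  proof (intro bexI[of _ "ns!(length ns - 1)"] ballI)
    fix m assume "m \<in> t" then obtain i where "i < length ns" "m = ns!i" using idx by blast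
    then show "col m \<le> col (ns!(length ns - 1))" using cl[of i] cl[of "length ns - 1"] ne by simp
  qed (use set ne in auto)
qed


lemma st_prop: assumes "is_tile t" shows "st t \<in> t" "\<And>m. m \<in> t \<Longrightarrow> col (st t) \<le> col m"
proof -
  obtain x where x: "x \<in> t" "\<forall>m\<in>t. col x \<le> col m" using tile_props(7)[OF assms] by blast
  have "\<exists>!n. n \<in> t \<and> (\<forall>m\<in>t. col n \<le> col m)"
  proof (rule ex1I[of _ x])
    fix y assume "y \<in> t \<and> (\<forall>m\<in>t. col y \<le> col m)"
    then show "y = x" using x tile_props(4)[OF assms, of y x] by force
  qed (use x in auto)
  then have "st t \<in> t \<and> (\<forall>m\<in>t. col (st t) \<le> col m)" unfolding st_def by (rule theI')
  then show "st t \<in> t" "\<And>m. m \<in> t \<Longrightarrow> col (st t) \<le> col m" by auto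
qed

lemma en_prop: assumes "is_tile t" shows "en t \<in> t" "\<And>m. m \<in> t \<Longrightarrow> col m \<le> col (en t)"
proof -
  obtain x where x: "x \<in> t" "\<forall>m\<in>t. col m \<le> col x" using tile_props(8)[OF assms] by blast
  have "\<exists>!n. n \<in> t \<and> (\<forall>m\<in>t. col m \<le> col n)"
  proof (rule ex1I[of _ x])
    fix y assume "y \<in> t \<and> (\<forall>m\<in>t. col m \<le> col y)"
    then show "y = x" using x tile_props(4)[OF assms, of y x] by force
  qed (use x in auto)
  then have "en t \<in> t \<and> (\<forall>m\<in>t. col m \<le> col (en t))" unfolding en_def by (rule theI')
  then show "en t \<in> t" "\<And>m. m \<in> t \<Longrightarrow> col m \<le> col (en t)" by auto
qed

lemma st_eqI: assumes "is_tile t" "x \<in> t" "\<And>m. m \<in> t \<Longrightarrow> col x \<le> col m" shows "st t = x"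
proof -
  have "col (st t) \<le> col x" "col x \<le> col (st t)" using st_prop[OF assms(1)] assms by auto
  then have "col (st t) = col x" by simp
  then show ?thesis using st_prop[OF assms(1)] assms tile_props(4)[OF assms(1), of "st t" x] by blast
qed

lemma en_eqI: assumes "is_tile t" "x \<in> t" "\<And>m. m \<in> t \<Longrightarrow> col m \<le> col x" shows "en t = x"
proof -
  have "col (en t) \<le> col x" "col x \<le> col (en t)" using en_prop[OF assms(1)] assms by auto
  then have "col (en t) = col x" by simp
  then show ?thesis using en_prop[OF assms(1)] assms tile_props(4)[OF assms(1), of "en t" x] by blast
qed

lemma dyck_ht: assumes "is_dyck_tile t"
  shows "\<And>x. x \<in> t \<Longrightarrow> ht x \<le> tile_ht t" "ht (st t) = tile_ht t" "ht (en t) = tile_ht t"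
    "\<exists>x\<in>t. ht x = tile_ht t"
proof -
  have tl: "is_tile t" using assms unfolding is_dyck_tile_def by auto
  show "\<And>x. x \<in> t \<Longrightarrow> ht x \<le> tile_ht t" unfolding tile_ht_def using tile_props(1)[OF tl] by simp
  show "ht (st t) = tile_ht t" "ht (en t) = tile_ht t" using assms unfolding is_dyck_tile_def by auto
  then show "\<exists>x\<in>t. ht x = tile_ht t" using st_prop(1)[OF tl] by blast
qed

lemma exists_switch: "\<not> P (0::nat) \<Longrightarrow> P m \<Longrightarrow> \<exists>k<m. \<not> P k \<and> P (Suc k)"
  by (induction m) (auto, metis less_Suc_eq)


lemma NE_eq_N: "NE z = N a \<Longrightarrow> z = NW a" by (cases z; cases a) (auto simp: NE_def N_def NW_def)
lemma SE_eq_N: "SE z = N a \<Longrightarrow> 1 \<le> fst z \<Longrightarrow> z = NW (N a)" by (cases z; cases a) (auto simp: SE_def N_def NW_def)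
lemma SE_N: "SE (N a) = NE a" by (cases a) (auto simp: SE_def N_def NE_def)
lemma N_SE: "1 \<le> fst x \<Longrightarrow> N (SE x) = NE x" by (cases x) (auto simp: SE_def N_def NE_def)
lemma NW_SE: "1 \<le> fst x \<Longrightarrow> NW (SE x) = x" by (cases x) (auto simp: SE_def NW_def)
lemma NW_NE: "NW (NE x) = N x" by (cases x) (auto simp: NW_def N_def NE_def)
lemma NE_NW: "NE (NW x) = N x" by (cases x) (auto simp: NW_def N_def NE_def)
lemma NE_eq: "NE z = x \<Longrightarrow> z = SW x" by (cases z; cases x) (auto simp: NE_def SW_def)
lemma SE_eq: "SE z = x \<Longrightarrow> 1 \<le> fst z \<Longrightarrow> z = NW x" by (cases z; cases x) (auto simp: SE_def NW_def)
lemma N_SW: "1 \<le> snd x \<Longrightarrow> N (SW x) = NW x" by (cases x) (auto simp: SW_def N_def NW_def)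
lemma NE_SW: "1 \<le> snd x \<Longrightarrow> NE (SW x) = x" by (cases x) (auto simp: SW_def NE_def)
lemma col_SW: "1 \<le> snd x \<Longrightarrow> col (SW x) = col x - 1" by (cases x) (auto simp: SW_def col_def)
lemma tower: "col z = col E \<Longrightarrow> ht z < ht E \<Longrightarrow> \<exists>m\<ge>1. E = (fst z + m, snd z + m)"
proof (cases z; cases E)
  fix p q r s assume *: "col z = col E" "ht z < ht E" "z = (p, q)" "E = (r, s)"
  then have "p < r" "int q - int p = int s - int r" by (auto simp: col_def ht_def)
  then show ?thesis using * by (intro exI[of _ "r - p"]) auto
qed

lemma N_NE: "N (NE u) = NE (N u)" by (cases u) (auto simp: NE_def N_def)
lemma N_NW: "N (NW u) = NW (N u)" by (cases u) (auto simp: NW_def N_def)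

lemma combine:
  assumes "C1 \<longleftrightarrow> C9 \<and> C6" "C3 \<Longrightarrow> C6" "C3 \<Longrightarrow> C9" "C6 \<Longrightarrow> C5" "C9 \<Longrightarrow> C8" "C5 \<Longrightarrow> C4" "C8 \<Longrightarrow> C7"
    "C4 \<Longrightarrow> C7" "C7 \<Longrightarrow> C4" "C4 \<Longrightarrow> C7 \<Longrightarrow> C3" "C2 \<Longrightarrow> C4" "C3 \<Longrightarrow> C2"
  shows "(C1 \<longleftrightarrow> C2) \<and> (C2 \<longleftrightarrow> C3) \<and> (C3 \<longleftrightarrow> C4) \<and> (C4 \<longleftrightarrow> C5) \<and>
         (C5 \<longleftrightarrow> C6) \<and> (C6 \<longleftrightarrow> C7) \<and> (C7 \<longleftrightarrow> C8) \<and> (C8 \<longleftrightarrow> C9)"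
  using assms by blast

locale DT =
  fixes T :: "node set set" and R :: "node set"
  assumes dt: "is_dyck_tiling T R"
    and conv: "\<And>x y z. x \<in> R \<Longrightarrow> y \<in> R \<Longrightarrow> fst x \<le> fst z \<Longrightarrow> snd x \<le> snd z
        \<Longrightarrow> fst z \<le> fst y \<Longrightarrow> snd z \<le> snd y \<Longrightarrow> z \<in> R"
    and fin: "finite R"
    and nodes: "\<And>x. x \<in> R \<Longrightarrow> is_node x"
begin

lemma tile_dyck: "t \<in> T \<Longrightarrow> is_dyck_tile t" using dt unfolding is_dyck_tiling_def by auto
lemma tile_is: "t \<in> T \<Longrightarrow> is_tile t" using tile_dyck unfolding is_dyck_tile_def by auto
lemma tile_sub: "t \<in> T \<Longrightarrow> x \<in> t \<Longrightarrow> x \<in> R" using dt unfolding is_dyck_tiling_def by auto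
lemma disj: "t1 \<in> T \<Longrightarrow> t2 \<in> T \<Longrightarrow> x \<in> t1 \<Longrightarrow> x \<in> t2 \<Longrightarrow> t1 = t2"
  using dt unfolding is_dyck_tiling_def by blast

lemma tof: assumes "n \<in> R" shows "tile_of T n \<in> T" "n \<in> tile_of T n"
proof -
  have "\<exists>!t. t \<in> T \<and> n \<in> t" using dt assms disj unfolding is_dyck_tiling_def by blast
  then have "tile_of T n \<in> T \<and> n \<in> tile_of T n" unfolding tile_of_def by (rule theI')
  then show "tile_of T n \<in> T" "n \<in> tile_of T n" by auto
qed

lemma tof_eq: "t \<in> T \<Longrightarrow> n \<in> t \<Longrightarrow> tile_of T n = t"
  using tof[OF tile_sub] disj by metis

lemma att: "m \<in> R \<Longrightarrow> attached T m n \<longleftrightarrow> n \<in> tile_of T m"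
  unfolding attached_def using tof tof_eq by metis

lemma tof_same: "m \<in> R \<Longrightarrow> n \<in> tile_of T m \<Longrightarrow> tile_of T n = tile_of T m"
  using tof tof_eq by metis

lemma noncross_right:
  assumes t: "t1 \<in> T" "t2 \<in> T" "t1 \<noteq> t2" and x: "x1 \<in> t1" "x2 \<in> t2" "col x1 = col x2" "ht x1 < ht x2"
  shows "y1 \<in> t1 \<Longrightarrow> y2 \<in> t2 \<Longrightarrow> col y1 = col y2 \<Longrightarrow> col y1 = col x1 + int n \<Longrightarrow> ht y1 < ht y2"
proof (induction n arbitrary: y1 y2)
  case 0
  then show ?case using x tile_props(4)[OF tile_is[OF t(1)], of y1 x1] tile_props(4)[OF tile_is[OF t(2)], of y2 x2]
    by auto
next
  case (Suc n)
  have T1: "is_tile t1" and T2: "is_tile t2" using t tile_is by auto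
  obtain u1 where u1: "u1 \<in> t1" "col u1 = col x1 + int n"
    using tile_props(5)[OF T1 x(1) Suc.prems(1), of "col x1 + int n"] Suc.prems by auto
  obtain u2 where u2: "u2 \<in> t2" "col u2 = col x1 + int n"
    using tile_props(5)[OF T2 x(2) Suc.prems(2), of "col x1 + int n"] Suc.prems x by auto
  have "ht u1 < ht u2" using Suc.IH[OF u1(1) u2(1)] u1 u2 by simp
  then have h: "ht u1 + 2 \<le> ht u2" using parity u1 u2 by simp
  have n1: "1 \<le> fst u1" using tile_props(3)[OF T1 u1(1)] unfolding is_node_def by simp
  have n2: "1 \<le> fst u2" using tile_props(3)[OF T2 u2(1)] unfolding is_node_def by simp
  have "y1 = NE u1 \<or> y1 = SE u1" using tile_props(6)[OF T1 u1(1) Suc.prems(1)] u1 Suc.prems by simp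
  then have a1: "ht y1 \<le> ht u1 + 1" using ht_SE[OF n1] by auto
  have "y2 = NE u2 \<or> y2 = SE u2" using tile_props(6)[OF T2 u2(1) Suc.prems(2)] u2 Suc.prems by simp
  then have a2: "ht u2 \<le> ht y2 + 1" using ht_SE[OF n2] by auto
  have "y1 \<noteq> y2" using Suc.prems t disj by blast
  then have "ht y1 \<noteq> ht y2" using same_node Suc.prems by blast
  then show ?case using a1 a2 h by simp
qed

lemma noncross:
  assumes t: "t1 \<in> T" "t2 \<in> T" "t1 \<noteq> t2" and x: "x1 \<in> t1" "x2 \<in> t2" "col x1 = col x2" "ht x1 < ht x2"
    and y: "y1 \<in> t1" "y2 \<in> t2" "col y1 = col y2"
  shows "ht y1 < ht y2"
proof (cases "col x1 \<le> col y1")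
  case True
  then show ?thesis using noncross_right[OF t x y, of "nat (col y1 - col x1)"] by simp
next
  case False
  show ?thesis
  proof (rule ccontr)
    assume "\<not> ht y1 < ht y2"
    moreover have "y1 \<noteq> y2" using y t disj by blast
    ultimately have lt: "ht y2 < ht y1" using same_node[of y1 y2] y by linarith
    have ne: "t2 \<noteq> t1" using t by simp
    have c: "col x2 = col y2 + int (nat (col x1 - col y1))" using False x y by simp
    have "ht x2 < ht x1"
      by (rule noncross_right[OF t(2) t(1) ne y(2) y(1) y(3)[symmetric] lt x(2) x(1) x(3)[symmetric] c])
    then show False using x by simp
  qed
qed


lemma nodeR: "x \<in> R \<Longrightarrow> 1 \<le> fst x \<and> 1 \<le> snd x" using nodes unfolding is_node_def by auto

lemma LA0:
  assumes a: "a \<in> R" "N a \<in> R" "attached T a (NW a)" "\<not> (NW (N a) \<in> R \<and> attached T (N a) (NW (N a)))"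
  shows "st (tile_of T (N a)) = N a" "tile_of T a \<noteq> tile_of T (N a)" "NW a \<in> tile_of T a"
proof -
  let ?t1 = "tile_of T a" and ?t2 = "tile_of T (N a)"
  have t1: "?t1 \<in> T" "a \<in> ?t1" and t2: "?t2 \<in> T" "N a \<in> ?t2" using tof a by auto
  have T1: "is_tile ?t1" and T2: "is_tile ?t2" using t1 t2 tile_is by auto
  show nw: "NW a \<in> ?t1" using att a by auto
  show neq: "?t1 \<noteq> ?t2"
  proof
    assume "?t1 = ?t2"
    then have "N a \<in> ?t1" using t2 by simp
    then have "a = N a" using tile_props(4)[OF T1 t1(2), of "N a"] by simp
    then show False using ht_N[of a] by simp
  qed
  show "st ?t2 = N a"
  proof (rule ccontr)
    assume ne: "st ?t2 \<noteq> N a"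
    have "col (st ?t2) \<le> col (N a)" using st_prop(2)[OF T2 t2(2)] .
    moreover have "col (st ?t2) \<noteq> col (N a)" using ne tile_props(4)[OF T2 st_prop(1)[OF T2] t2(2)] by auto
    ultimately obtain z where z: "z \<in> ?t2" "col z = col (N a) - 1"
      using tile_props(5)[OF T2 st_prop(1)[OF T2] t2(2), of "col (N a) - 1"] by auto
    have "N a = NE z \<or> N a = SE z" using tile_props(6)[OF T2 z(1) t2(2)] z by simp
    then show False
    proof
      assume "N a = NE z"
      then have "z = NW a" using NE_eq_N[of z a] by simp
      then have "?t1 = ?t2" using disj[OF t1(1) t2(1) nw] z by simp
      then show False using neq by simp
    next
      assume "N a = SE z"
      moreover have "1 \<le> fst z" using tile_props(3)[OF T2 z(1)] unfolding is_node_def by simp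
      ultimately have "z = NW (N a)" using SE_eq_N[of z a] by simp
      then have "NW (N a) \<in> ?t2" using z by simp
      moreover then have "NW (N a) \<in> R" using tile_sub[OF t2(1)] by blast
      moreover have "attached T (N a) (NW (N a))" using att[OF a(2)] \<open>NW (N a) \<in> ?t2\<close> by blast
      ultimately show False using a(4) by blast
    qed
  qed
qed

lemma LA:
  assumes a: "a \<in> R" "N a \<in> R" "attached T a (NW a)" "\<not> (NW (N a) \<in> R \<and> attached T (N a) (NW (N a)))"
  shows "\<exists>x. x \<in> R \<and> N x \<in> R \<and> en (tile_of T (N x)) = N x \<and> en (tile_of T x) \<noteq> x \<and> col a \<le> col x"
proof -
  let ?t1 = "tile_of T a" and ?t2 = "tile_of T (N a)"
  have t1: "?t1 \<in> T" "a \<in> ?t1" and t2: "?t2 \<in> T" "N a \<in> ?t2" using tof a by auto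
  have T1: "is_tile ?t1" and T2: "is_tile ?t2" using t1 t2 tile_is by auto
  have D1: "is_dyck_tile ?t1" and D2: "is_dyck_tile ?t2" using t1 t2 tile_dyck by auto
  note L = LA0[OF a]
  have h2: "tile_ht ?t2 = ht a + 2" using dyck_ht(2)[OF D2] L(1) by simp
  define E where "E = en ?t2"
  have E: "E \<in> ?t2" "ht E = ht a + 2" "col a \<le> col E"
    using en_prop(1)[OF T2] en_prop(2)[OF T2 t2(2)] dyck_ht(3)[OF D2] h2 unfolding E_def by auto
  define F where "F = en ?t1"
  have F: "F \<in> ?t1" "ht a + 1 \<le> ht F" "col a \<le> col F"
    using en_prop(1)[OF T1] en_prop(2)[OF T1 t1(2)] dyck_ht(3)[OF D1] dyck_ht(1)[OF D1 L(3)] unfolding F_def by auto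
  have EF: "col E < col F"
  proof (rule ccontr)
    assume "\<not> col E < col F"
    then obtain w where w: "w \<in> ?t2" "col w = col F"
      using tile_props(5)[OF T2 t2(2) E(1), of "col F"] F by auto
    have "ht F < ht w" using noncross[OF t1(1) t2(1) L(2) t1(2) t2(2) _ _ F(1) w(1)] w by simp
    then have "ht F + 2 \<le> ht w" using parity w by simp
    moreover have "ht w \<le> ht a + 2" using dyck_ht(1)[OF D2 w(1)] h2 by simp
    ultimately show False using F by simp
  qed
  obtain z where z: "z \<in> ?t1" "col z = col E"
    using tile_props(5)[OF T1 t1(2) F(1), of "col E"] E EF by auto
  have zE: "ht z < ht E" using noncross[OF t1(1) t2(1) L(2) t1(2) t2(2) _ _ z(1) E(1)] z by simp
  have zF: "z \<noteq> F" using z EF by auto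
  obtain m where m: "m \<ge> 1" "E = (fst z + m, snd z + m)" using tower[OF z(2) zE] by blast
  define nd where "nd k = (fst z + k, snd z + k)" for k
  have zR: "z \<in> R" and ER: "E \<in> R" using tile_sub t1 t2 z E by auto
  have ndR: "nd k \<in> R" if "k \<le> m" for k
    using conv[OF zR ER, of "nd k"] that m unfolding nd_def by auto
  have ndN: "N (nd k) = nd (Suc k)" for k unfolding nd_def N_def by simp
  define P where "P k = (en (tile_of T (nd k)) = nd k)" for k
  have P0: "\<not> P 0"
  proof -
    have "nd 0 = z" unfolding nd_def by simp
    then show ?thesis unfolding P_def using tof_eq[OF t1(1) z(1)] zF F_def by simp
  qed
  have Pm: "P m"
  proof -
    have "nd m = E" unfolding nd_def using m by simp
    then show ?thesis unfolding P_def using tof_eq[OF t2(1) E(1)] E_def by simp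
  qed
  obtain k where k: "k < m" "\<not> P k" "P (Suc k)" using exists_switch[of P m] P0 Pm by blast
  have "col (nd k) = col z" unfolding nd_def col_def by simp
  then have c: "col a \<le> col (nd k)" using z E by simp
  have "en (tile_of T (N (nd k))) = N (nd k)" using k(3) ndN[of k] unfolding P_def by simp
  moreover have "N (nd k) \<in> R" using ndR[of "Suc k"] k(1) ndN[of k] by simp
  moreover have "nd k \<in> R" using ndR[of k] k(1) by simp
  moreover have "en (tile_of T (nd k)) \<noteq> nd k" using k(2) unfolding P_def by simp
  ultimately show ?thesis using c by blast
qed


lemma LA0':
  assumes a: "a \<in> R" "N a \<in> R" "attached T a (NE a)" "\<not> (NE (N a) \<in> R \<and> attached T (N a) (NE (N a)))"
  shows "en (tile_of T (N a)) = N a" "tile_of T a \<noteq> tile_of T (N a)" "NE a \<in> tile_of T a"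
proof -
  let ?t1 = "tile_of T a" and ?t2 = "tile_of T (N a)"
  have t1: "?t1 \<in> T" "a \<in> ?t1" and t2: "?t2 \<in> T" "N a \<in> ?t2" using tof a by auto
  have T1: "is_tile ?t1" and T2: "is_tile ?t2" using t1 t2 tile_is by auto
  show nw: "NE a \<in> ?t1" using att a by auto
  show neq: "?t1 \<noteq> ?t2"
  proof
    assume "?t1 = ?t2"
    then have "N a \<in> ?t1" using t2 by simp
    then have "a = N a" using tile_props(4)[OF T1 t1(2), of "N a"] by simp
    then show False using ht_N[of a] by simp
  qed
  show "en ?t2 = N a"
  proof (rule ccontr)
    assume ne: "en ?t2 \<noteq> N a"
    have "col (N a) \<le> col (en ?t2)" using en_prop(2)[OF T2 t2(2)] .
    moreover have "col (en ?t2) \<noteq> col (N a)" using ne tile_props(4)[OF T2 en_prop(1)[OF T2] t2(2)] by auto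
    ultimately obtain z where z: "z \<in> ?t2" "col z = col (N a) + 1"
      using tile_props(5)[OF T2 t2(2) en_prop(1)[OF T2], of "col (N a) + 1"] by auto
    have "z = NE (N a) \<or> z = SE (N a)" using tile_props(6)[OF T2 t2(2) z(1)] z by simp
    then show False
    proof
      assume "z = SE (N a)"
      then have "z = NE a" using SE_N[of a] by simp
      then have "?t1 = ?t2" using disj[OF t1(1) t2(1) nw] z by simp
      then show False using neq by simp
    next
      assume "z = NE (N a)"
      then have "NE (N a) \<in> ?t2" using z by simp
      moreover then have "NE (N a) \<in> R" using tile_sub[OF t2(1)] by blast
      moreover have "attached T (N a) (NE (N a))" using att[OF a(2)] \<open>NE (N a) \<in> ?t2\<close> by blast
      ultimately show False using a(4) by blast
    qed
  qed
qed

lemma LA':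
  assumes a: "a \<in> R" "N a \<in> R" "attached T a (NE a)" "\<not> (NE (N a) \<in> R \<and> attached T (N a) (NE (N a)))"
  shows "\<exists>x. x \<in> R \<and> N x \<in> R \<and> st (tile_of T (N x)) = N x \<and> st (tile_of T x) \<noteq> x \<and> col x \<le> col a"
proof -
  let ?t1 = "tile_of T a" and ?t2 = "tile_of T (N a)"
  have t1: "?t1 \<in> T" "a \<in> ?t1" and t2: "?t2 \<in> T" "N a \<in> ?t2" using tof a by auto
  have T1: "is_tile ?t1" and T2: "is_tile ?t2" using t1 t2 tile_is by auto
  have D1: "is_dyck_tile ?t1" and D2: "is_dyck_tile ?t2" using t1 t2 tile_dyck by auto
  note L = LA0'[OF a]
  have h2: "tile_ht ?t2 = ht a + 2" using dyck_ht(3)[OF D2] L(1) by simp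
  define E where "E = st ?t2"
  have E: "E \<in> ?t2" "ht E = ht a + 2" "col E \<le> col a"
    using st_prop(1)[OF T2] st_prop(2)[OF T2 t2(2)] dyck_ht(2)[OF D2] h2 unfolding E_def by auto
  define F where "F = st ?t1"
  have F: "F \<in> ?t1" "ht a + 1 \<le> ht F" "col F \<le> col a"
    using st_prop(1)[OF T1] st_prop(2)[OF T1 t1(2)] dyck_ht(2)[OF D1] dyck_ht(1)[OF D1 L(3)] unfolding F_def by auto
  have EF: "col F < col E"
  proof (rule ccontr)
    assume "\<not> col F < col E"
    then obtain w where w: "w \<in> ?t2" "col w = col F"
      using tile_props(5)[OF T2 E(1) t2(2), of "col F"] F by auto
    have "ht F < ht w" using noncross[OF t1(1) t2(1) L(2) t1(2) t2(2) _ _ F(1) w(1)] w by simp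
    then have "ht F + 2 \<le> ht w" using parity w by simp
    moreover have "ht w \<le> ht a + 2" using dyck_ht(1)[OF D2 w(1)] h2 by simp
    ultimately show False using F by simp
  qed
  obtain z where z: "z \<in> ?t1" "col z = col E"
    using tile_props(5)[OF T1 F(1) t1(2), of "col E"] E EF by auto
  have zE: "ht z < ht E" using noncross[OF t1(1) t2(1) L(2) t1(2) t2(2) _ _ z(1) E(1)] z by simp
  have zF: "z \<noteq> F" using z EF by auto
  obtain m where m: "m \<ge> 1" "E = (fst z + m, snd z + m)" using tower[OF z(2) zE] by blast
  define nd where "nd k = (fst z + k, snd z + k)" for k
  have zR: "z \<in> R" and ER: "E \<in> R" using tile_sub t1 t2 z E by auto
  have ndR: "nd k \<in> R" if "k \<le> m" for k
    using conv[OF zR ER, of "nd k"] that m unfolding nd_def by auto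
  have ndN: "N (nd k) = nd (Suc k)" for k unfolding nd_def N_def by simp
  define P where "P k = (st (tile_of T (nd k)) = nd k)" for k
  have P0: "\<not> P 0"
  proof -
    have "nd 0 = z" unfolding nd_def by simp
    then show ?thesis unfolding P_def using tof_eq[OF t1(1) z(1)] zF F_def by simp
  qed
  have Pm: "P m"
  proof -
    have "nd m = E" unfolding nd_def using m by simp
    then show ?thesis unfolding P_def using tof_eq[OF t2(1) E(1)] E_def by simp
  qed
  obtain k where k: "k < m" "\<not> P k" "P (Suc k)" using exists_switch[of P m] P0 Pm by blast
  have "col (nd k) = col z" unfolding nd_def col_def by simp
  then have c: "col (nd k) \<le> col a" using z E by simp
  have "st (tile_of T (N (nd k))) = N (nd k)" using k(3) ndN[of k] unfolding P_def by simp
  moreover have "N (nd k) \<in> R" using ndR[of "Suc k"] k(1) ndN[of k] by simp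
  moreover have "nd k \<in> R" using ndR[of k] k(1) by simp
  moreover have "st (tile_of T (nd k)) \<noteq> nd k" using k(2) unfolding P_def by simp
  ultimately show ?thesis using c by blast
qed

lemma LB:
  assumes x: "x \<in> R" "N x \<in> R" "en (tile_of T (N x)) = N x" "en (tile_of T x) \<noteq> x"
  shows "(attached T x (NE x) \<and> \<not> (NE (N x) \<in> R \<and> attached T (N x) (NE (N x)))) \<or>
    (SE x \<in> R \<and> N (SE x) \<in> R \<and> attached T (SE x) (NW (SE x)) \<and>
     \<not> (NW (N (SE x)) \<in> R \<and> attached T (N (SE x)) (NW (N (SE x)))) \<and> col (SE x) = col x + 1)"
proof -
  let ?t = "tile_of T x" and ?t2 = "tile_of T (N x)"
  have t: "?t \<in> T" "x \<in> ?t" and t2: "?t2 \<in> T" "N x \<in> ?t2" using tof x by auto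
  have Tt: "is_tile ?t" and T2: "is_tile ?t2" using t t2 tile_is by auto
  have fx: "1 \<le> fst x" using nodeR x by simp
  have "col x \<le> col (en ?t)" using en_prop(2)[OF Tt t(2)] .
  moreover have "col (en ?t) \<noteq> col x" using x(4) tile_props(4)[OF Tt en_prop(1)[OF Tt] t(2)] by auto
  ultimately obtain z where z: "z \<in> ?t" "col z = col x + 1"
    using tile_props(5)[OF Tt t(2) en_prop(1)[OF Tt], of "col x + 1"] by auto
  have bad: "\<not> w \<in> ?t2" if "col w = col x + 1" for w
    using en_prop(2)[OF T2, of w] x(3) that by auto
  have "z = NE x \<or> z = SE x" using tile_props(6)[OF Tt t(2) z(1)] z by simp
  then show ?thesis
  proof
    assume zz: "z = NE x"
    have "attached T x (NE x)" using att[OF x(1)] z zz by simp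
    moreover have "\<not> (NE (N x) \<in> R \<and> attached T (N x) (NE (N x)))"
      using att[OF x(2)] bad[of "NE (N x)"] by simp
    ultimately show ?thesis by blast
  next
    assume zz: "z = SE x"
    have yR: "SE x \<in> R" using tile_sub[OF t(1)] z zz by simp
    have NyR: "N (SE x) \<in> R" using N_SE[OF fx] conv[OF x(1) x(2), of "NE x"] by (simp add: NE_def N_def)
    have "SE x \<in> ?t" using z zz by simp
    then have "tile_of T (SE x) = ?t" using tof_same[OF x(1)] by blast
    then have "NW (SE x) \<in> tile_of T (SE x)" using NW_SE[OF fx] t(2) by simp
    then have "attached T (SE x) (NW (SE x))" using att[OF yR] by blast
    moreover have "\<not> (NW (N (SE x)) \<in> R \<and> attached T (N (SE x)) (NW (N (SE x))))"
    proof
      assume "NW (N (SE x)) \<in> R \<and> attached T (N (SE x)) (NW (N (SE x)))"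
      then have "N x \<in> tile_of T (N (SE x))" using att[OF NyR] N_SE[OF fx] NW_NE by simp
      then have "tile_of T (N x) = tile_of T (N (SE x))" using tof_same[OF NyR] by simp
      then have "N (SE x) \<in> ?t2" using tof(2)[OF NyR] by simp
      moreover have "col (N (SE x)) = col x + 1" using col_SE[OF fx] by simp
      ultimately show False using bad by blast
    qed
    moreover have "col (SE x) = col x + 1" using col_SE[OF fx] .
    ultimately show ?thesis using yR NyR by blast
  qed
qed

lemma LB':
  assumes x: "x \<in> R" "N x \<in> R" "st (tile_of T (N x)) = N x" "st (tile_of T x) \<noteq> x"
  shows "(attached T x (NW x) \<and> \<not> (NW (N x) \<in> R \<and> attached T (N x) (NW (N x)))) \<or>
    (SW x \<in> R \<and> N (SW x) \<in> R \<and> attached T (SW x) (NE (SW x)) \<and>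
     \<not> (NE (N (SW x)) \<in> R \<and> attached T (N (SW x)) (NE (N (SW x)))) \<and> col (SW x) = col x - 1)"
proof -
  let ?t = "tile_of T x" and ?t2 = "tile_of T (N x)"
  have t: "?t \<in> T" "x \<in> ?t" and t2: "?t2 \<in> T" "N x \<in> ?t2" using tof x by auto
  have Tt: "is_tile ?t" and T2: "is_tile ?t2" using t t2 tile_is by auto
  have sx: "1 \<le> snd x" using nodeR x by simp
  have "col (st ?t) \<le> col x" using st_prop(2)[OF Tt t(2)] .
  moreover have "col (st ?t) \<noteq> col x" using x(4) tile_props(4)[OF Tt st_prop(1)[OF Tt] t(2)] by auto
  ultimately obtain z where z: "z \<in> ?t" "col z = col x - 1"
    using tile_props(5)[OF Tt st_prop(1)[OF Tt] t(2), of "col x - 1"] by auto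
  have bad: "\<not> w \<in> ?t2" if "col w = col x - 1" for w
    using st_prop(2)[OF T2, of w] x(3) that by auto
  have "x = NE z \<or> x = SE z" using tile_props(6)[OF Tt z(1) t(2)] z by simp
  then show ?thesis
  proof
    assume zz: "x = SE z"
    have "1 \<le> fst z" using nodeR tile_sub[OF t(1) z(1)] by simp
    then have zz': "z = NW x" using SE_eq[of z x] zz by simp
    have "attached T x (NW x)" using att[OF x(1)] z zz' by simp
    moreover have "\<not> (NW (N x) \<in> R \<and> attached T (N x) (NW (N x)))"
      using att[OF x(2)] bad[of "NW (N x)"] by simp
    ultimately show ?thesis by blast
  next
    assume zz: "x = NE z"
    then have zz': "z = SW x" using NE_eq by simp
    have yR: "SW x \<in> R" using tile_sub[OF t(1)] z zz' by simp
    have NyR: "N (SW x) \<in> R" using N_SW[OF sx] conv[OF x(1) x(2), of "NW x"] by (simp add: NW_def N_def)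
    have "SW x \<in> ?t" using z zz' by simp
    then have "tile_of T (SW x) = ?t" using tof_same[OF x(1)] by blast
    then have "NE (SW x) \<in> tile_of T (SW x)" using NE_SW[OF sx] t(2) by simp
    then have "attached T (SW x) (NE (SW x))" using att[OF yR] by blast
    moreover have "\<not> (NE (N (SW x)) \<in> R \<and> attached T (N (SW x)) (NE (N (SW x))))"
    proof
      assume "NE (N (SW x)) \<in> R \<and> attached T (N (SW x)) (NE (N (SW x)))"
      then have "N x \<in> tile_of T (N (SW x))" using att[OF NyR] N_SW[OF sx] NE_NW by simp
      then have "tile_of T (N x) = tile_of T (N (SW x))" using tof_same[OF NyR] by simp
      then have "N (SW x) \<in> ?t2" using tof(2)[OF NyR] by simp
      moreover have "col (N (SW x)) = col x - 1" using col_SW[OF sx] by simp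
      ultimately show False using bad by blast
    qed
    moreover have "col (SW x) = col x - 1" using col_SW[OF sx] .
    ultimately show ?thesis using yR NyR by blast
  qed
qed


abbreviation "c2 \<equiv> (\<forall>a. a \<in> R \<and> N a \<in> R \<longrightarrow> dp T (N a) \<ge> dp T a)"
abbreviation "c3 \<equiv> (\<forall>a. a \<in> R \<and> N a \<in> R \<longrightarrow> N ` tile_of T a \<subseteq> tile_of T (N a))"
abbreviation "c4 \<equiv> (\<forall>a. a \<in> R \<and> N a \<in> R \<and> attached T a (NW a) \<longrightarrow>
                 NW (N a) \<in> R \<and> attached T (N a) (NW (N a)))"
abbreviation "c5 \<equiv> (\<forall>a. a \<in> R \<and> N a \<in> R \<and> N a = en (tile_of T (N a)) \<longrightarrow>
                 a = en (tile_of T a))"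
abbreviation "c7 \<equiv> (\<forall>a. a \<in> R \<and> N a \<in> R \<and> attached T a (NE a) \<longrightarrow>
                 NE (N a) \<in> R \<and> attached T (N a) (NE (N a)))"
abbreviation "c8 \<equiv> (\<forall>a. a \<in> R \<and> N a \<in> R \<and> N a = st (tile_of T (N a)) \<longrightarrow>
                 a = st (tile_of T a))"

lemma c5_c4: "c5 \<Longrightarrow> c4"
  using LA by fastforce

lemma c8_c7: "c8 \<Longrightarrow> c7"
  using LA' by fastforce

lemma c4_c7: assumes c4 shows c7
proof (rule ccontr)
  define V where "V = {a. a \<in> R \<and> N a \<in> R \<and> attached T a (NE a) \<and> \<not> (NE (N a) \<in> R \<and> attached T (N a) (NE (N a)))}"
  assume "\<not> c7"
  then have ne: "V \<noteq> {}" unfolding V_def by blast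
  have finV: "finite V" using fin unfolding V_def by (rule rev_finite_subset) auto
  have "Min (col ` V) \<in> col ` V" using ne finV by simp
  then obtain a where a: "a \<in> V" "col a = Min (col ` V)" by auto
  have mn: "col a \<le> col b" if "b \<in> V" for b using a finV that by simp
  obtain x where x: "x \<in> R" "N x \<in> R" "st (tile_of T (N x)) = N x" "st (tile_of T x) \<noteq> x" "col x \<le> col a"
    using LA' a(1) unfolding V_def by blast
  have "SW x \<in> V \<and> col (SW x) = col x - 1" using LB'[OF x(1-4)] assms x unfolding V_def by blast
  then show False using mn x(5) by fastforce
qed

lemma c7_c4: assumes c7 shows c4
proof (rule ccontr)
  define V where "V = {a. a \<in> R \<and> N a \<in> R \<and> attached T a (NW a) \<and> \<not> (NW (N a) \<in> R \<and> attached T (N a) (NW (N a)))}"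
  assume "\<not> c4"
  then have ne: "V \<noteq> {}" unfolding V_def by blast
  have finV: "finite V" using fin unfolding V_def by (rule rev_finite_subset) auto
  have "Max (col ` V) \<in> col ` V" using ne finV by simp
  then obtain a where a: "a \<in> V" "col a = Max (col ` V)" by auto
  have mx: "col b \<le> col a" if "b \<in> V" for b using a finV that by simp
  obtain x where x: "x \<in> R" "N x \<in> R" "en (tile_of T (N x)) = N x" "en (tile_of T x) \<noteq> x" "col a \<le> col x"
    using LA a(1) unfolding V_def by blast
  have "SE x \<in> V \<and> col (SE x) = col x + 1" using LB[OF x(1-4)] assms x unfolding V_def by blast
  then show False using mx x(5) by fastforce
qed

lemma c47_c3: assumes c4 c7 shows c3
proof (intro allI impI subsetI)
  fix a y assume a: "a \<in> R \<and> N a \<in> R" and y: "y \<in> N ` tile_of T a"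
  let ?t1 = "tile_of T a" and ?t2 = "tile_of T (N a)"
  have t1: "?t1 \<in> T" "a \<in> ?t1" and t2: "?t2 \<in> T" "N a \<in> ?t2" using tof a by auto
  have T1: "is_tile ?t1" using t1 tile_is by auto
  have inR: "w \<in> R" if "w \<in> ?t1" for w using tile_sub[OF t1(1) that] .
  have in2: "N w \<in> R" if "N w \<in> ?t2" for w using tile_sub[OF t2(1) that] .
  have same1: "tile_of T w = ?t1" if "w \<in> ?t1" for w using tof_eq[OF t1(1) that] .
  have same2: "tile_of T (N w) = ?t2" if "N w \<in> ?t2" for w using tof_eq[OF t2(1) that] .
  have R: "\<forall>x\<in>?t1. col x = col a + int n \<longrightarrow> N x \<in> ?t2" for n
  proof (induction n)
    case 0 then show ?case using tile_props(4)[OF T1 _ t1(2)] t2 by auto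
  next
    case (Suc n)
    show ?case
    proof (intro ballI impI)
      fix x assume x: "x \<in> ?t1" "col x = col a + int (Suc n)"
      obtain u where u: "u \<in> ?t1" "col u = col a + int n"
        using tile_props(5)[OF T1 t1(2) x(1), of "col a + int n"] x by auto
      have Nu: "N u \<in> ?t2" using Suc.IH u by blast
      have uR: "u \<in> R" and NuR: "N u \<in> R" using inR u(1) in2 Nu by auto
      have "x = NE u \<or> x = SE u" using tile_props(6)[OF T1 u(1) x(1)] u x by simp
      then show "N x \<in> ?t2"
      proof
        assume xx: "x = NE u"
        have "attached T u (NE u)" using att[OF uR] same1[OF u(1)] x xx by simp
        then have "NE (N u) \<in> R \<and> attached T (N u) (NE (N u))" using assms(2) uR NuR by blast
        then have "NE (N u) \<in> tile_of T (N u)" using att[OF NuR] by blast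
        then show ?thesis using same2[OF Nu] xx N_NE[of u] by simp
      next
        assume xx: "x = SE u"
        have fu: "1 \<le> fst u" using nodeR uR by simp
        have xR: "x \<in> R" using inR x(1) .
        have NxR: "N x \<in> R" using xx N_SE[OF fu] conv[OF uR NuR, of "NE u"] by (simp add: NE_def N_def)
        have "NW x \<in> tile_of T x" using same1[OF x(1)] u(1) xx NW_SE[OF fu] by simp
        then have "attached T x (NW x)" using att[OF xR] by blast
        then have "NW (N x) \<in> R \<and> attached T (N x) (NW (N x))" using assms(1) xR NxR by blast
        then have "N u \<in> tile_of T (N x)" using att[OF NxR] xx N_SE[OF fu] NW_NE[of u] by simp
        then have "tile_of T (N u) = tile_of T (N x)" using tof_same[OF NxR] by blast
        then show ?thesis using same2[OF Nu] tof(2)[OF NxR] by simp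
      qed
    qed
  qed
  have L: "\<forall>x\<in>?t1. col x = col a - int n \<longrightarrow> N x \<in> ?t2" for n
  proof (induction n)
    case 0 then show ?case using tile_props(4)[OF T1 _ t1(2)] t2 by auto
  next
    case (Suc n)
    show ?case
    proof (intro ballI impI)
      fix x assume x: "x \<in> ?t1" "col x = col a - int (Suc n)"
      obtain u where u: "u \<in> ?t1" "col u = col a - int n"
        using tile_props(5)[OF T1 x(1) t1(2), of "col a - int n"] x by auto
      have Nu: "N u \<in> ?t2" using Suc.IH u by blast
      have uR: "u \<in> R" and NuR: "N u \<in> R" using inR u(1) in2 Nu by auto
      have xR: "x \<in> R" using inR x(1) .
      have "u = NE x \<or> u = SE x" using tile_props(6)[OF T1 x(1) u(1)] u x by simp
      then show "N x \<in> ?t2"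
      proof
        assume xx: "u = SE x"
        have fx: "1 \<le> fst x" using nodeR xR by simp
        have xx': "x = NW u" using SE_eq[of x u] xx fx by simp
        have "attached T u (NW u)" using att[OF uR] same1[OF u(1)] x xx' by simp
        then have "NW (N u) \<in> R \<and> attached T (N u) (NW (N u))" using assms(1) uR NuR by blast
        then have "NW (N u) \<in> tile_of T (N u)" using att[OF NuR] by blast
        then show ?thesis using same2[OF Nu] xx' N_NW[of u] by simp
      next
        assume xx: "u = NE x"
        have NxR: "N x \<in> R" using xx conv[OF uR NuR, of "N x"] by (simp add: NE_def N_def)
        have "NE x \<in> tile_of T x" using same1[OF x(1)] u(1) xx by simp
        then have "attached T x (NE x)" using att[OF xR] by blast
        then have "NE (N x) \<in> R \<and> attached T (N x) (NE (N x))" using assms(2) xR NxR by blast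
        then have "N u \<in> tile_of T (N x)" using att[OF NxR] xx N_NE[of x] by simp
        then have "tile_of T (N u) = tile_of T (N x)" using tof_same[OF NxR] by blast
        then show ?thesis using same2[OF Nu] tof(2)[OF NxR] by simp
      qed
    qed
  qed
  obtain x where x: "x \<in> ?t1" "y = N x" using y by blast
  show "y \<in> ?t2"
  proof (cases "col a \<le> col x")
    case True
    then have "col x = col a + int (nat (col x - col a))" by simp
    then show ?thesis using R x by blast
  next
    case False
    then have "col x = col a - int (nat (col a - col x))" by simp
    then show ?thesis using L x by blast
  qed
qed


lemma c2_c4: assumes c2 shows c4
proof (rule ccontr)
  assume "\<not> c4"
  then obtain a where a: "a \<in> R" "N a \<in> R" "attached T a (NW a)" "\<not> (NW (N a) \<in> R \<and> attached T (N a) (NW (N a)))"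
    by blast
  note L = LA0[OF a]
  have t1: "tile_of T a \<in> T" and t2: "tile_of T (N a) \<in> T" using tof a by auto
  have D1: "is_dyck_tile (tile_of T a)" and D2: "is_dyck_tile (tile_of T (N a))" using t1 t2 tile_dyck by auto
  have "dp T (N a) = 0" unfolding dp_def using dyck_ht(2)[OF D2] L(1) by simp
  moreover have "dp T a \<ge> 1" unfolding dp_def using dyck_ht(1)[OF D1 L(3)] by simp
  moreover have "dp T a \<le> dp T (N a)" using assms a(1,2) by blast
  ultimately show False by simp
qed

lemma c6_c5: assumes "right_cover_inclusive T R" shows c5
proof (intro allI impI)
  fix a assume a: "a \<in> R \<and> N a \<in> R \<and> N a = en (tile_of T (N a))"
  have t1: "tile_of T a \<in> T" "a \<in> tile_of T a" using tof a by auto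
  have T1: "is_tile (tile_of T a)" using t1 tile_is by auto
  have "col (en (tile_of T a)) \<le> col (en (tile_of T (N a)))" using assms a unfolding right_cover_inclusive_def by blast
  then have "col (en (tile_of T a)) \<le> col a" using a by (metis col_N)
  moreover have "col a \<le> col (en (tile_of T a))" using en_prop(2)[OF T1 t1(2)] .
  ultimately show "a = en (tile_of T a)" using tile_props(4)[OF T1 t1(2) en_prop(1)[OF T1]] by simp
qed

lemma c9_c8: assumes "left_cover_inclusive T R" shows c8
proof (intro allI impI)
  fix a assume a: "a \<in> R \<and> N a \<in> R \<and> N a = st (tile_of T (N a))"
  have t1: "tile_of T a \<in> T" "a \<in> tile_of T a" using tof a by auto
  have T1: "is_tile (tile_of T a)" using t1 tile_is by auto
  have "col (st (tile_of T (N a))) \<le> col (st (tile_of T a))" using assms a unfolding left_cover_inclusive_def by blast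
  then have "col a \<le> col (st (tile_of T a))" using a by (metis col_N)
  moreover have "col (st (tile_of T a)) \<le> col a" using st_prop(2)[OF T1 t1(2)] .
  ultimately show "a = st (tile_of T a)" using tile_props(4)[OF T1 t1(2) st_prop(1)[OF T1]] by simp
qed

lemma c3_c6: assumes c3 shows "right_cover_inclusive T R"
  unfolding right_cover_inclusive_def
proof (intro allI impI)
  fix a assume a: "a \<in> R \<and> N a \<in> R"
  have t1: "tile_of T a \<in> T" "a \<in> tile_of T a" and t2: "tile_of T (N a) \<in> T" using tof a by auto
  have T1: "is_tile (tile_of T a)" and T2: "is_tile (tile_of T (N a))" using t1 t2 tile_is by auto
  have "N (en (tile_of T a)) \<in> tile_of T (N a)" using assms a en_prop(1)[OF T1] by blast
  from en_prop(2)[OF T2 this] show "col (en (tile_of T a)) \<le> col (en (tile_of T (N a)))" by simp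
qed

lemma c3_c9: assumes c3 shows "left_cover_inclusive T R"
  unfolding left_cover_inclusive_def
proof (intro allI impI)
  fix a assume a: "a \<in> R \<and> N a \<in> R"
  have t1: "tile_of T a \<in> T" "a \<in> tile_of T a" and t2: "tile_of T (N a) \<in> T" using tof a by auto
  have T1: "is_tile (tile_of T a)" and T2: "is_tile (tile_of T (N a))" using t1 t2 tile_is by auto
  have "N (st (tile_of T a)) \<in> tile_of T (N a)" using assms a st_prop(1)[OF T1] by blast
  from st_prop(2)[OF T2 this] show "col (st (tile_of T (N a))) \<le> col (st (tile_of T a))" by simp
qed

lemma c3_c2: assumes c3 shows c2
proof (intro allI impI)
  fix a assume a: "a \<in> R \<and> N a \<in> R"
  have t1: "tile_of T a \<in> T" "a \<in> tile_of T a" and t2: "tile_of T (N a) \<in> T" using tof a by auto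
  have D1: "is_dyck_tile (tile_of T a)" and D2: "is_dyck_tile (tile_of T (N a))" using t1 t2 tile_dyck by auto
  obtain m where m: "m \<in> tile_of T a" "ht m = tile_ht (tile_of T a)" using dyck_ht(4)[OF D1] by blast
  have "N m \<in> tile_of T (N a)" using assms a m by blast
  then have "tile_ht (tile_of T a) + 2 \<le> tile_ht (tile_of T (N a))" using dyck_ht(1)[OF D2] m by fastforce
  moreover have "ht a \<le> tile_ht (tile_of T a)" using dyck_ht(1)[OF D1 t1(2)] .
  ultimately show "dp T a \<le> dp T (N a)" unfolding dp_def by simp
qed

lemma all_equiv:
  "(cover_inclusive T R \<longleftrightarrow> c2) \<and> (c2 \<longleftrightarrow> c3) \<and> (c3 \<longleftrightarrow> c4) \<and> (c4 \<longleftrightarrow> c5) \<and>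
   (c5 \<longleftrightarrow> right_cover_inclusive T R) \<and> (right_cover_inclusive T R \<longleftrightarrow> c7) \<and> (c7 \<longleftrightarrow> c8) \<and>
   (c8 \<longleftrightarrow> left_cover_inclusive T R)"
  by (rule combine[OF cover_inclusive_def c3_c6 c3_c9 c6_c5 c9_c8 c5_c4 c8_c7 c4_c7 c7_c4 c47_c3 c2_c4 c3_c2])

end

lemma skew_conv:
  assumes pl: "is_partition lam" and pm: "is_partition mu"
    and x: "x \<in> skew lam mu" and y: "y \<in> skew lam mu"
    and z: "fst x \<le> fst z" "snd x \<le> snd z" "fst z \<le> fst y" "snd z \<le> snd y"
  shows "z \<in> skew lam mu"
proof -
  obtain i j where zz: "z = (i, j)" by (cases z)
  have x1: "1 \<le> fst x" "1 \<le> snd x" "\<not> snd x \<le> mu (fst x)" using x unfolding skew_def diagram_def by auto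
  have y1: "snd y \<le> lam (fst y)" using y unfolding skew_def diagram_def by auto
  have i1: "1 \<le> i" "1 \<le> j" using x1 z zz by auto
  have "lam (fst y) \<le> lam i" using pl i1 z zz unfolding is_partition_def by auto
  then have "j \<le> lam i" using y1 z zz by simp
  moreover have "\<not> j \<le> mu i"
  proof
    assume "j \<le> mu i"
    moreover have "mu i \<le> mu (fst x)" using pm x1 z zz unfolding is_partition_def by auto
    ultimately show False using x1 z zz by simp
  qed
  ultimately show ?thesis using i1 zz unfolding skew_def diagram_def by auto
qed

lemma skew_fin:
  assumes pl: "is_partition lam" shows "finite (skew lam mu)"
proof -
  have f: "finite {i. 1 \<le> i \<and> lam i \<noteq> 0}" using pl unfolding is_partition_def by auto
  have "diagram lam \<subseteq> {i. 1 \<le> i \<and> lam i \<noteq> 0} \<times> {..lam 1}"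
  proof
    fix p assume "p \<in> diagram lam"
    then obtain a b where p: "p = (a, b)" "1 \<le> a" "1 \<le> b" "b \<le> lam a" unfolding diagram_def by auto
    have "lam a \<le> lam 1" using pl p unfolding is_partition_def by auto
    then show "p \<in> {i. 1 \<le> i \<and> lam i \<noteq> 0} \<times> {..lam 1}" using p by auto
  qed
  moreover have "finite ({i. 1 \<le> i \<and> lam i \<noteq> 0} \<times> {..lam 1})" using f by simp
  ultimately have "finite (diagram lam)" by (rule finite_subset)
  then show ?thesis unfolding skew_def by auto
qed

lemma skew_nodes: "x \<in> skew lam mu \<Longrightarrow> is_node x"
  unfolding skew_def diagram_def is_node_def by auto

theorem theorem3p1:
  fixes lam mu :: "nat \<Rightarrow> nat" and T :: "node set set"
  assumes "is_partition lam" and "is_partition mu" and "contains lam mu"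
    and "is_dyck_tiling T (skew lam mu)"
  defines "R \<equiv> skew lam mu"
  defines "C1 \<equiv> cover_inclusive T R"
    and "C2 \<equiv> (\<forall>a. a \<in> R \<and> N a \<in> R \<longrightarrow> dp T (N a) \<ge> dp T a)"
    and "C3 \<equiv> (\<forall>a. a \<in> R \<and> N a \<in> R \<longrightarrow> N ` tile_of T a \<subseteq> tile_of T (N a))"
    and "C4 \<equiv> (\<forall>a. a \<in> R \<and> N a \<in> R \<and> attached T a (NW a) \<longrightarrow>
                 NW (N a) \<in> R \<and> attached T (N a) (NW (N a)))"
    and "C5 \<equiv> (\<forall>a. a \<in> R \<and> N a \<in> R \<and> N a = en (tile_of T (N a)) \<longrightarrow>
                 a = en (tile_of T a))"
    and "C6 \<equiv> right_cover_inclusive T R"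
    and "C7 \<equiv> (\<forall>a. a \<in> R \<and> N a \<in> R \<and> attached T a (NE a) \<longrightarrow>
                 NE (N a) \<in> R \<and> attached T (N a) (NE (N a)))"
    and "C8 \<equiv> (\<forall>a. a \<in> R \<and> N a \<in> R \<and> N a = st (tile_of T (N a)) \<longrightarrow>
                 a = st (tile_of T a))"
    and "C9 \<equiv> left_cover_inclusive T R"
  shows "(C1 \<longleftrightarrow> C2) \<and> (C2 \<longleftrightarrow> C3) \<and> (C3 \<longleftrightarrow> C4) \<and> (C4 \<longleftrightarrow> C5) \<and>
         (C5 \<longleftrightarrow> C6) \<and> (C6 \<longleftrightarrow> C7) \<and> (C7 \<longleftrightarrow> C8) \<and> (C8 \<longleftrightarrow> C9)"
proof -
  interpret DT T R
  proof
    show "is_dyck_tiling T R" using assms(4) unfolding R_def .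
    show "\<And>x y z. x \<in> R \<Longrightarrow> y \<in> R \<Longrightarrow> fst x \<le> fst z \<Longrightarrow> snd x \<le> snd z
        \<Longrightarrow> fst z \<le> fst y \<Longrightarrow> snd z \<le> snd y \<Longrightarrow> z \<in> R"
      unfolding R_def using skew_conv[OF assms(1,2)] by blast
    show "finite R" unfolding R_def using skew_fin[OF assms(1)] .
    show "\<And>x. x \<in> R \<Longrightarrow> is_node x" unfolding R_def using skew_nodes by blast
  qed
  show ?thesis using all_equiv unfolding C1_def C2_def C3_def C4_def C5_def C6_def C7_def C8_def C9_def .
qed

end
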